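(* Let $(x,y,z)(\eta_1)$ be a trajectory of system (S2) such that there is $\eta_{1,*}\in\mathbb{R}$ with $x(\eta_{1,*})>0$, $z(\eta_{1,*})>0$ and $$-\frac{\sigma+2}{p-m}<y(\eta_1)<0\qquad\text{for all }\eta_1>\eta_{1,*}.$$ Then, in the variables $(X,Y,Z)=(1/x,y/x,z/x)$, the trajectory converges as $\eta_1\to\infty$ either to $P_1=(0,0,0)$ or to $P_{\gamma_0}=(0,0,\gamma_0)$, where $\gamma_0=\frac{1}{\alpha(p-1)}$.
   Context: Let $N\geq1$, $m>1$, $\sigma>0$, $p>m$, $L=\sigma(m-1)+2(p-1)$, $\alpha=(\sigma+2)/L$. System (S2) is $$\dot x=x(2-(m-1)y),\quad \dot y=-x-(N-2)y+z-my^2-\tfrac{p-m}{\sigma+2}xy,\quad \dot z=z(\sigma+2+(p-m)y),$$ and under $X=1/x$, $Y=y/x$, $Z=z/x$ it is equivalent (up to time change) to system (S1): $$\dot X=X[(m-1)Y-2X],\quad \dot Y=-Y^2-\tfrac{p-m}{\sigma+2}Y-X-NXY+XZ,\quad \dot Z=Z[(p-1)Y+\sigma X].$$ *)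

theory Defs
  imports "HOL-Analysis.Analysis"
begin

definition L_const :: "real \<Rightarrow> real \<Rightarrow> real \<Rightarrow> real" where
  "L_const m p \<sigma> = \<sigma> * (m - 1) + 2 * (p - 1)"

definition alpha_const :: "real \<Rightarrow> real \<Rightarrow> real \<Rightarrow> real" where
  "alpha_const m p \<sigma> = (\<sigma> + 2) / L_const m p \<sigma>"

definition gamma0 :: "real \<Rightarrow> real \<Rightarrow> real \<Rightarrow> real" where
  "gamma0 m p \<sigma> = 1 / (alpha_const m p \<sigma> * (p - 1))"

definition S2_solution_on ::
  "nat \<Rightarrow> real \<Rightarrow> real \<Rightarrow> real \<Rightarrow> (real \<Rightarrow> real) \<Rightarrow> (real \<Rightarrow> real) \<Rightarrow> (real \<Rightarrow> real) \<Rightarrow> real \<Rightarrow> bool"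
  where
  "S2_solution_on N m p \<sigma> x y z t0 \<longleftrightarrow>
     (\<forall>t\<ge>t0.
        (x has_real_derivative x t * (2 - (m - 1) * y t)) (at t within {t0..}) \<and>
        (y has_real_derivative
            (- x t - (real N - 2) * y t + z t - m * (y t)^2 - (p - m) / (\<sigma> + 2) * x t * y t))
          (at t within {t0..}) \<and>
        (z has_real_derivative z t * (\<sigma> + 2 + (p - m) * y t)) (at t within {t0..}))"

end

theory Submission
  imports Defs
begin


lemma cont_from_deriv:
  fixes u u' :: "real \<Rightarrow> real"
  assumes "\<forall>t\<ge>s. (u has_real_derivative u' t) (at t)" "a \<ge> s"
  shows "continuous_on {a..b} u"
  using assms
proof (intro continuous_at_imp_continuous_on ballI)
  fix t assume "t \<in> {a..b}"
  hence "t \<ge> s" using assms(2) by simp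
  hence "(u has_real_derivative u' t) (at t)" using assms(1) by simp
  thus "isCont u t" by (rule DERIV_isCont)
qed

lemma barrier_stay:
  fixes u u' :: "real \<Rightarrow> real"
  assumes d: "\<forall>t\<ge>s. (u has_real_derivative u' t) (at t)"
    and us: "u s < e" and lev: "\<forall>t\<ge>s. u t = e \<longrightarrow> u' t < 0"
  shows "\<forall>t\<ge>s. u t < e"
proof (rule ccontr)
  assume "\<not> (\<forall>t\<ge>s. u t < e)"
  then obtain t1 where t1: "t1 \<ge> s" "u t1 \<ge> e" by (auto simp: not_less)
  have cont: "continuous_on {s..t1} u" using cont_from_deriv[OF d, of s t1] by simp
  define S where "S = {s..t1} \<inter> u -` {e..}"
  have clS: "closed S" unfolding S_def
    by (rule continuous_closed_preimage[OF cont]) auto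
  have neS: "S \<noteq> {}" using t1 unfolding S_def by auto
  have bdS: "bdd_below S" unfolding S_def by (rule bdd_belowI[of _ s]) auto
  define r where "r = Inf S"
  have rS: "r \<in> S" unfolding r_def using closed_contains_Inf[OF neS bdS clS] .
  have rmin: "\<And>t. t \<in> S \<Longrightarrow> r \<le> t" unfolding r_def using bdS by (simp add: cInf_lower)
  have rs: "s \<le> r" "r \<le> t1" "u r \<ge> e" using rS unfolding S_def by auto
  have "r \<noteq> s" using rs us by auto
  hence rgt: "r > s" using rs by auto
  have "continuous_on {s..r} u" using cont_from_deriv[OF d, of s r] by simp
  then obtain t' where t': "s \<le> t'" "t' \<le> r" "u t' = e"
    using IVT'[of u s e r] us rs by force
  have "t' \<in> S" using t' rs unfolding S_def by auto
  hence "r = t'" using rmin t' by force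
  hence ure: "u r = e" using t' by simp
  have "u' r < 0" using lev rs ure by auto
  then obtain dd where dd: "dd > 0" "\<forall>h>0. h < dd \<longrightarrow> u r < u (r - h)"
  proof -
    have "(u has_real_derivative u' r) (at r)" using d rs by simp
    from DERIV_neg_dec_left[OF this \<open>u' r < 0\<close>] show ?thesis using that by blast
  qed
  define h where "h = min (dd/2) (r - s)"
  have h: "h > 0" "h < dd" "h \<le> r - s" using dd rgt unfolding h_def by auto
  have "u (r - h) > e" using dd(2) h ure by auto
  hence "r - h \<in> S" using h rs unfolding S_def by auto
  hence "r \<le> r - h" using rmin by blast
  thus False using h by simp
qed

lemma barrier_eventually:
  fixes u u' :: "real \<Rightarrow> real"
  assumes d: "\<forall>t\<ge>T. (u has_real_derivative u' t) (at t)"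
    and dl: "\<delta> > 0" and key: "\<forall>t\<ge>T. u t \<ge> e \<longrightarrow> u' t \<le> -\<delta>"
  shows "\<exists>T'\<ge>T. \<forall>t\<ge>T'. u t < e"
proof -
  have "\<exists>T'\<ge>T. u T' < e"
  proof (rule ccontr)
    assume "\<not> (\<exists>T'\<ge>T. u T' < e)"
    hence ge: "\<forall>t\<ge>T. u t \<ge> e" by (auto simp: not_less)
    define t1 where "t1 = T + (u T - e) / \<delta> + 1"
    have "u T \<ge> e" using ge by simp
    hence "(u T - e) / \<delta> \<ge> 0" using dl by simp
    hence Tt1: "T < t1" unfolding t1_def by simp
    have dd: "\<And>x. T \<le> x \<Longrightarrow> x \<le> t1 \<Longrightarrow> (u has_real_derivative u' x) (at x)" using d by simp
    obtain \<xi> where xi: "T < \<xi>" "\<xi> < t1" "u t1 - u T = (t1 - T) * u' \<xi>"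
      using MVT2[of T t1 u u', OF Tt1 dd] by blast
    have "u' \<xi> \<le> -\<delta>" using key ge xi by auto
    hence "(t1 - T) * u' \<xi> \<le> (t1 - T) * (-\<delta>)" using Tt1 by (intro mult_left_mono) auto
    also have "\<dots> = -(u T - e) - \<delta>" unfolding t1_def using dl by (simp add: field_simps)
    finally have "u t1 < e" using xi dl by linarith
    moreover have "u t1 \<ge> e" using ge Tt1 by simp
    ultimately show False by simp
  qed
  then obtain T' where T': "T' \<ge> T" "u T' < e" by blast
  have "\<forall>t\<ge>T'. u t < e"
  proof (rule barrier_stay[of T' u u'])
    show "\<forall>t\<ge>T'. (u has_real_derivative u' t) (at t)" using d T' by auto
    show "u T' < e" by (rule T'(2))
    show "\<forall>t\<ge>T'. u t = e \<longrightarrow> u' t < 0"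
    proof (intro allI impI)
      fix t assume "T' \<le> t" "u t = e"
      hence "u' t \<le> -\<delta>" using key T' by auto
      thus "u' t < 0" using dl by simp
    qed
  qed
  thus ?thesis using T' by blast
qed

lemma lin_growth:
  fixes u u' :: "real \<Rightarrow> real"
  assumes d: "\<forall>t\<ge>s. (u has_real_derivative u' t) (at t)"
    and g: "\<forall>t\<ge>s. u' t \<ge> \<eta>" and ts: "t \<ge> s"
  shows "u t \<ge> u s + \<eta> * (t - s)"
proof (cases "t = s")
  case True thus ?thesis by simp
next
  case False
  hence st: "s < t" using ts by simp
  have dd: "\<And>x. s \<le> x \<Longrightarrow> x \<le> t \<Longrightarrow> (u has_real_derivative u' x) (at x)" using d by simp
  obtain \<xi> where xi: "s < \<xi>" "\<xi> < t" "u t - u s = (t - s) * u' \<xi>"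
    using MVT2[of s t u u', OF st dd] by blast
  have "(t - s) * u' \<xi> \<ge> (t - s) * \<eta>" using g xi st by (intro mult_left_mono) auto
  thus ?thesis using xi by (simp add: algebra_simps)
qed

lemma tendsto_eps:
  fixes f :: "real \<Rightarrow> real"
  assumes "\<forall>\<epsilon>>0. \<exists>T. \<forall>t\<ge>T. \<bar>f t - l\<bar> < \<epsilon>"
  shows "(f \<longlongrightarrow> l) at_top"
  unfolding tendsto_iff dist_real_def eventually_at_top_linorder using assms by blast



lemma within_to_at:
  fixes f :: "real \<Rightarrow> real"
  assumes "(f has_real_derivative D) (at t within {t0..})" "t > t0"
  shows "(f has_real_derivative D) (at t)"
proof -
  have "(f has_real_derivative D) (at t within {t0<..})" by (rule DERIV_subset[OF assms(1)]) auto
  thus ?thesis using at_within_open[of t "{t0<..}"] assms(2) by simp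
qed

lemma cont_within:
  fixes f D :: "real \<Rightarrow> real"
  assumes "\<forall>t\<ge>t0. (f has_real_derivative D t) (at t within {t0..})"
  shows "continuous_on {t0..b} f"
proof -
  have "continuous_on {t0..} f" unfolding continuous_on_eq_continuous_within
    using assms DERIV_continuous by blast
  thus ?thesis by (rule continuous_on_subset) auto
qed

lemma pos_growth:
  fixes f a :: "real \<Rightarrow> real"
  assumes d0: "\<forall>t\<ge>t0. (f has_real_derivative f t * a t) (at t within {t0..})"
    and ak: "\<forall>t>t0. a t \<ge> k" and f0: "f t0 > 0"
  shows "\<forall>t\<ge>t0. f t > 0 \<and> (f t)^2 \<ge> (f t0)^2 * exp (2*k*(t-t0))"
proof -
  have cont: "\<And>b. continuous_on {t0..b} f" using cont_within[OF d0] .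
  define q where "q = (\<lambda>s. f s * f s * exp (-(2*k) * s))"
  have mono: "q t0 \<le> q t" if tt: "t0 \<le> t" for t
  proof (rule DERIV_nonneg_imp_increasing_open[OF tt])
    fix u assume u: "t0 < u" "u < t"
    have df: "DERIV f u :> f u * a u" using within_to_at[of f "f u * a u" u t0] d0 u by auto
    have de: "DERIV (\<lambda>s. exp (-(2*k) * s)) u :> exp (-(2*k) * u) * (-(2*k))"
      using DERIV_fun_exp[OF DERIV_cmult_Id[of "-(2*k)" u UNIV]] by simp
    have dq: "DERIV q u :> ((f u * a u) * f u + (f u * a u) * f u) * exp (-(2*k) * u)
        + (exp (-(2*k) * u) * (-(2*k))) * (f u * f u)"
      unfolding q_def by (intro DERIV_mult df de)
    have eq: "((f u * a u) * f u + (f u * a u) * f u) * exp (-(2*k) * u)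
        + (exp (-(2*k) * u) * (-(2*k))) * (f u * f u) = 2 * (f u * f u) * exp (-(2*k) * u) * (a u - k)"
      by (simp add: algebra_simps)
    have "2 * (f u * f u) * exp (-(2*k) * u) * (a u - k) \<ge> 0"
    proof -
      have "f u * f u \<ge> 0" by simp
      moreover have "a u - k \<ge> 0" using ak u by auto
      ultimately show ?thesis by simp
    qed
    thus "\<exists>y. DERIV q u :> y \<and> 0 \<le> y" using dq eq by metis
  next
    show "continuous_on {t0..t} q" unfolding q_def
      by (intro continuous_intros cont)
  qed
  have sq: "(f t)^2 \<ge> (f t0)^2 * exp (2*k*(t-t0))" if tt: "t0 \<le> t" for t
  proof -
    have "f t0 * f t0 * exp (-(2*k) * t0) \<le> f t * f t * exp (-(2*k) * t)"
      using mono[OF tt] unfolding q_def by simp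
    moreover have "exp (-(2*k) * t0) = exp (2*k*(t-t0)) * exp (-(2*k) * t)"
      by (simp add: exp_add[symmetric] algebra_simps)
    ultimately have "(f t0)^2 * exp (2*k*(t-t0)) * exp (-(2*k) * t) \<le> (f t)^2 * exp (-(2*k) * t)"
      by (simp add: power2_eq_square algebra_simps)
    thus ?thesis by simp
  qed
  have nz: "f t \<noteq> 0" if tt: "t0 \<le> t" for t
  proof
    assume "f t = 0"
    hence "(f t0)^2 * exp (2*k*(t-t0)) \<le> 0" using sq[OF tt] by simp
    moreover have "(f t0)^2 * exp (2*k*(t-t0)) > 0" using f0 by simp
    ultimately show False by simp
  qed
  have pos: "f t > 0" if tt: "t0 \<le> t" for t
  proof (rule ccontr)
    assume "\<not> f t > 0"
    hence "f t \<le> 0" by simp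
    then obtain s where "t0 \<le> s" "s \<le> t" "f s = 0"
      using IVT2'[of f t 0 t0, OF _ _ tt cont] f0 by auto
    thus False using nz by auto
  qed
  show ?thesis using pos sq by auto
qed



theorem lemma3p4:
  fixes N :: nat and m p \<sigma> t0 :: real and x y z :: "real \<Rightarrow> real"
  assumes "N \<ge> 1" and "m > 1" and "\<sigma> > 0" and "p > m"
    and "S2_solution_on N m p \<sigma> x y z t0"
    and "x t0 > 0" and "z t0 > 0"
    and "\<forall>t>t0. - (\<sigma> + 2) / (p - m) < y t \<and> y t < 0"
  shows "((\<lambda>t. (1 / x t, y t / x t, z t / x t)) \<longlongrightarrow> (0, 0, 0)) at_top \<or>
         ((\<lambda>t. (1 / x t, y t / x t, z t / x t)) \<longlongrightarrow> (0, 0, gamma0 m p \<sigma>)) at_top"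
proof -
  note sol = assms(5)[unfolded S2_solution_on_def]
  define c where "c = (p - m) / (\<sigma> + 2)"
  define yb where "yb = (\<sigma> + 2) / (p - m)"
  have cpos: "c > 0" and ybpos: "yb > 0" using assms unfolding c_def yb_def by auto
  have cyb: "c * yb = 1" using assms unfolding c_def yb_def by auto
  have e8: "- (\<sigma> + 2) / (p - m) = - yb" unfolding yb_def by (rule minus_divide_left[symmetric])
  have hy: "\<forall>t>t0. - yb < y t \<and> y t < 0" using assms(8) unfolding e8 by blast
  have xg: "\<forall>t\<ge>t0. x t > 0 \<and> (x t)^2 \<ge> (x t0)^2 * exp (2*2*(t-t0))"
  proof (rule pos_growth[where a = "\<lambda>t. 2 - (m - 1) * y t"])
    show "\<forall>t\<ge>t0. (x has_real_derivative x t * (2 - (m - 1) * y t)) (at t within {t0..})"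
      using sol by blast
    show "\<forall>t>t0. 2 \<le> 2 - (m - 1) * y t"
    proof (intro allI impI)
      fix t assume "t > t0" hence "y t < 0" using hy by auto
      hence "(m - 1) * y t < 0" using assms(2) mult_pos_neg[of "m - 1" "y t"] by simp
      thus "2 \<le> 2 - (m - 1) * y t" by simp
    qed
  qed (rule assms(6))
  have zg: "\<forall>t\<ge>t0. z t > 0 \<and> (z t)^2 \<ge> (z t0)^2 * exp (2*0*(t-t0))"
  proof (rule pos_growth[where a = "\<lambda>t. \<sigma> + 2 + (p - m) * y t"])
    show "\<forall>t\<ge>t0. (z has_real_derivative z t * (\<sigma> + 2 + (p - m) * y t)) (at t within {t0..})"
      using sol by blast
    show "\<forall>t>t0. 0 \<le> \<sigma> + 2 + (p - m) * y t"
    proof (intro allI impI)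
      fix t assume "t > t0" hence "- yb < y t" using hy by auto
      hence "(p - m) * (- yb) \<le> (p - m) * y t" using assms(4) by (intro mult_left_mono) auto
      moreover have "(p - m) * yb = \<sigma> + 2" unfolding yb_def using assms by auto
      ultimately show "0 \<le> \<sigma> + 2 + (p - m) * y t" by simp
    qed
  qed (rule assms(7))
  have xpos: "\<And>t. t \<ge> t0 \<Longrightarrow> x t > 0" using xg by auto
  have zpos: "\<And>t. t \<ge> t0 \<Longrightarrow> z t > 0" using zg by auto
  have xlarge: "\<exists>T\<ge>t0+1. \<forall>t\<ge>T. x t \<ge> M" for M
  proof -
    define T where "T = t0 + 1 + M^2 / (4 * (x t0)^2)"
    have x0: "x t0 > 0" by (rule assms(6))
    have "T \<ge> t0 + 1" unfolding T_def using x0 by simp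
    moreover have "x t \<ge> M" if tT: "t \<ge> T" for t
    proof -
      have "M^2 / (4 * (x t0)^2) \<ge> 0" by simp
      hence tt: "t \<ge> t0" using tT unfolding T_def by linarith
      have "(x t)^2 \<ge> (x t0)^2 * exp (4*(t-t0))" using xg tt by auto
      moreover have "exp (4*(t-t0)) \<ge> 1 + 4*(t-t0)" by (rule exp_ge_add_one_self)
      hence "(x t0)^2 * (1 + 4*(t-t0)) \<le> (x t0)^2 * exp (4*(t-t0))"
        by (intro mult_left_mono) auto
      ultimately have "(x t)^2 \<ge> (x t0)^2 * (1 + 4*(t-t0))" by linarith
      moreover have "t - t0 \<ge> M^2 / (4 * (x t0)^2)" using tT unfolding T_def by linarith
      hence "(x t0)^2 * (4*(t-t0)) \<ge> M^2" using x0 by (simp add: field_simps)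
      moreover have "(x t0)^2 * (1 + 4*(t-t0)) = (x t0)^2 + (x t0)^2 * (4*(t-t0))"
        by (simp add: algebra_simps)
      moreover have "(x t0)^2 \<ge> 0" by simp
      ultimately have "(x t)^2 \<ge> M^2" by linarith
      hence "\<bar>M\<bar> \<le> \<bar>x t\<bar>" by (simp add: abs_le_square_iff)
      thus ?thesis using xpos[OF tt] by simp
    qed
    ultimately show ?thesis by blast
  qed
  define b where "b = (\<lambda>t. - (real N - 2) * y t - m * (y t)^2)"
  define B where "B = \<bar>real N - 2\<bar> * yb + m * yb^2"
  have hb: "\<bar>b t\<bar> \<le> B" if tt: "t > t0" for t
  proof -
    have ya: "\<bar>y t\<bar> \<le> yb" using hy tt by auto
    have "\<bar>(real N - 2) * y t\<bar> \<le> \<bar>real N - 2\<bar> * yb"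
      unfolding abs_mult by (intro mult_left_mono ya) auto
    moreover have "(y t)^2 \<le> yb^2" using abs_le_square_iff[of "y t" yb] ya ybpos by simp
    hence "\<bar>m * (y t)^2\<bar> \<le> m * yb^2" using assms(2) by (simp add: abs_mult)
    ultimately show ?thesis unfolding b_def B_def by linarith
  qed
  define Z where "Z = (\<lambda>t. z t / x t)"
  define F where "F = (\<lambda>t. Z t - 1 - c * y t)"
  define Zd where "Zd = (\<lambda>t. Z t * (\<sigma> + (p - 1) * y t))"
  define Fd where "Fd = (\<lambda>t. Zd t - c * (x t * F t + b t))"
  have dx: "(x has_real_derivative x t * (2 - (m - 1) * y t)) (at t)" if "t > t0" for t
  proof -
    have "t \<ge> t0" using that by simp
    hence "(x has_real_derivative x t * (2 - (m - 1) * y t)) (at t within {t0..})" using sol by blast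
    thus ?thesis using within_to_at that by blast
  qed
  have dz: "(z has_real_derivative z t * (\<sigma> + 2 + (p - m) * y t)) (at t)" if "t > t0" for t
  proof -
    have "t \<ge> t0" using that by simp
    hence "(z has_real_derivative z t * (\<sigma> + 2 + (p - m) * y t)) (at t within {t0..})" using sol by blast
    thus ?thesis using within_to_at that by blast
  qed
  have dy: "(y has_real_derivative (- x t - (real N - 2) * y t + z t - m * (y t)^2 - (p - m) / (\<sigma> + 2) * x t * y t)) (at t)" if "t > t0" for t
  proof -
    have "t \<ge> t0" using that by simp
    hence "(y has_real_derivative (- x t - (real N - 2) * y t + z t - m * (y t)^2 - (p - m) / (\<sigma> + 2) * x t * y t)) (at t within {t0..})" using sol by blast
    thus ?thesis using within_to_at that by blast
  qed
  have yeq: "- x t - (real N - 2) * y t + z t - m * (y t)^2 - (p - m) / (\<sigma> + 2) * x t * y t = x t * F t + b t"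
    if "t > t0" for t
  proof -
    have "x t \<noteq> 0" using xpos[of t] that by simp
    thus ?thesis unfolding F_def Z_def b_def c_def by (simp add: field_simps)
  qed
  have dZ: "(Z has_real_derivative Zd t) (at t)" if tt: "t > t0" for t
  proof -
    have nz: "x t \<noteq> 0" using xpos[of t] tt by simp
    have "(Z has_real_derivative (z t * (\<sigma> + 2 + (p - m) * y t) * x t - z t * (x t * (2 - (m - 1) * y t))) / (x t * x t)) (at t)"
      unfolding Z_def by (rule DERIV_divide[OF dz[OF tt] dx[OF tt] nz])
    moreover have "(z t * (\<sigma> + 2 + (p - m) * y t) * x t - z t * (x t * (2 - (m - 1) * y t))) / (x t * x t) = Zd t"
      unfolding Zd_def Z_def using nz by (simp add: field_simps)
    ultimately show ?thesis by simp
  qed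
  have dF: "(F has_real_derivative Fd t) (at t)" if tt: "t > t0" for t
  proof -
    have "(F has_real_derivative Zd t - 0 - c * (- x t - (real N - 2) * y t + z t - m * (y t)^2 - (p - m) / (\<sigma> + 2) * x t * y t)) (at t)"
      unfolding F_def by (intro DERIV_diff DERIV_cmult dZ[OF tt] dy[OF tt] DERIV_const)
    thus ?thesis unfolding Fd_def using yeq[OF tt] by simp
  qed
  have Zpos: "Z t > 0" if "t \<ge> t0" for t unfolding Z_def using xpos[of t] zpos[of t] that by simp
  have ZF: "Z t = F t + 1 + c * y t" for t unfolding F_def by simp
  have Zlt: "Z t < 1 + F t" if "t > t0" for t
  proof -
    have "c * y t < 0" using hy that cpos by (simp add: mult_pos_neg)
    thus ?thesis using ZF[of t] by simp
  qed
  have Fsmall: "\<exists>T\<ge>t0+1. \<forall>t\<ge>T. \<bar>F t\<bar> < \<epsilon>" if ep: "\<epsilon> > 0" for \<epsilon>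
  proof -
    obtain T1 where T1: "T1 \<ge> t0+1" "\<forall>t\<ge>T1. x t \<ge> (\<epsilon>*\<sigma> + \<sigma> + c*B + 1) / (\<epsilon>*c)"
      using xlarge[of "(\<epsilon>*\<sigma> + \<sigma> + c*B + 1) / (\<epsilon>*c)"] by blast
    have up: "\<exists>T'\<ge>T1. \<forall>t\<ge>T'. F t < \<epsilon>"
    proof (rule barrier_eventually[where u' = Fd and \<delta> = 1])
      show "\<forall>t\<ge>T1. (F has_real_derivative Fd t) (at t)" using dF T1 by auto
      show "\<forall>t\<ge>T1. \<epsilon> \<le> F t \<longrightarrow> Fd t \<le> - 1"
      proof (intro allI impI)
        fix t assume tT: "T1 \<le> t" and Fe: "\<epsilon> \<le> F t"
        have tt: "t > t0" using tT T1 by simp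
        have yneg: "y t < 0" using hy tt by auto
        have Zp: "Z t > 0" using Zpos tt by simp
        have xb: "x t \<ge> (\<epsilon>*\<sigma> + \<sigma> + c*B + 1) / (\<epsilon>*c)" using T1 tT by auto
        hence xb2: "\<epsilon> * c * x t \<ge> \<epsilon>*\<sigma> + \<sigma> + c*B + 1" using ep cpos by (simp add: field_simps)
        have B0: "B \<ge> 0" using hb[OF tt] by linarith
        have cx: "c * x t \<ge> \<sigma>"
        proof -
          have cB: "c * B \<ge> 0" using cpos B0 by simp
          have "\<epsilon> * (c * x t) = \<epsilon> * c * x t" by simp
          hence "\<epsilon> * (c * x t) \<ge> \<epsilon> * \<sigma>" using xb2 assms(3) cB by linarith
          thus ?thesis using ep by simp
        qed
        have "(p - 1) * y t < 0" using yneg assms(2,4) mult_pos_neg[of "p - 1" "y t"] by simp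
        hence a1: "Z t * ((p - 1) * y t) \<le> 0"
          using mult_nonneg_nonpos[OF less_imp_le[OF Zp]] less_imp_le by blast
        have a2: "Z t * \<sigma> \<le> (F t + 1) * \<sigma>"
        proof -
          have "Z t \<le> F t + 1" using Zlt[OF tt] by simp
          thus ?thesis using assms(3) by (intro mult_right_mono) auto
        qed
        have "- b t \<le> B" using abs_le_D2[OF hb[OF tt]] .
        hence "c * (- b t) \<le> c * B" using cpos by (intro mult_left_mono) auto
        hence a3: "- c * b t \<le> c * B" by simp
        have a4: "F t * (\<sigma> - c * x t) \<le> \<epsilon> * (\<sigma> - c * x t)"
          using Fe cx by (intro mult_right_mono_neg) auto
        have "Fd t = Z t * \<sigma> + Z t * ((p - 1) * y t) - c * x t * F t - c * b t"
          unfolding Fd_def Zd_def by (simp add: algebra_simps)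
        also have "\<dots> \<le> (F t + 1) * \<sigma> - c * x t * F t + c * B" using a1 a2 a3 by linarith
        also have "\<dots> = F t * (\<sigma> - c * x t) + \<sigma> + c * B" by (simp add: algebra_simps)
        also have "\<dots> \<le> \<epsilon> * (\<sigma> - c * x t) + \<sigma> + c * B" using a4 by linarith
        also have "\<dots> \<le> -1" using xb2 by (simp add: algebra_simps)
        finally show "Fd t \<le> -1" .
      qed
    qed simp
    obtain T2 where T2: "T2 \<ge> t0+1" "\<forall>t\<ge>T2. x t \<ge> ((p - 1) * yb + c*B + 1) / (c*\<epsilon>)"
      using xlarge[of "((p - 1) * yb + c*B + 1) / (c*\<epsilon>)"] by blast
    have lo: "\<exists>T'\<ge>T2. \<forall>t\<ge>T'. - F t < \<epsilon>"
    proof (rule barrier_eventually[where u' = "\<lambda>t. - Fd t" and \<delta> = 1])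
      show "\<forall>t\<ge>T2. ((\<lambda>t. - F t) has_real_derivative - Fd t) (at t)" using dF T2 by (auto intro: DERIV_minus)
      show "\<forall>t\<ge>T2. \<epsilon> \<le> - F t \<longrightarrow> - Fd t \<le> - 1"
      proof (intro allI impI)
        fix t assume tT: "T2 \<le> t" and Fe: "\<epsilon> \<le> - F t"
        have tt: "t > t0" using tT T2 by simp
        have yy: "- yb < y t" "y t < 0" using hy tt by auto
        have Zp: "Z t > 0" using Zpos tt by simp
        have Z1: "Z t < 1" using Zlt[OF tt] Fe ep by linarith
        have xb: "x t \<ge> ((p - 1) * yb + c*B + 1) / (c*\<epsilon>)" using T2 tT by auto
        hence xb2: "c * \<epsilon> * x t \<ge> (p - 1) * yb + c*B + 1" using ep cpos by (simp add: field_simps)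
        have w: "\<sigma> + (p - 1) * y t > - (p - 1) * yb"
        proof -
          have "(p - 1) * y t > (p - 1) * (- yb)" using yy assms(2,4) by (intro mult_strict_left_mono) auto
          moreover have "(p - 1) * (- yb) = - (p - 1) * yb" by (simp add: algebra_simps)
          ultimately show ?thesis using assms(3) by linarith
        qed
        have a1: "Zd t \<ge> - (p - 1) * yb"
        proof (cases "\<sigma> + (p - 1) * y t \<ge> 0")
          case True
          hence "Zd t \<ge> 0" unfolding Zd_def using Zp by simp
          moreover have "(p - 1) * yb \<ge> 0" using ybpos assms(2,4) by simp
          ultimately show ?thesis by linarith
        next
          case False
          hence "Z t * (\<sigma> + (p - 1) * y t) \<ge> 1 * (\<sigma> + (p - 1) * y t)"
            using Z1 by (intro mult_right_mono_neg) auto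
          hence "Z t * (\<sigma> + (p - 1) * y t) \<ge> \<sigma> + (p - 1) * y t" by simp
          thus ?thesis unfolding Zd_def using w by linarith
        qed
        have "b t \<le> B" using abs_le_D1[OF hb[OF tt]] .
        hence "c * b t \<le> c * B" using cpos by (intro mult_left_mono) auto
        hence a3: "- c * b t \<ge> - c * B" by simp
        have a4: "- c * x t * F t \<ge> c * \<epsilon> * x t"
        proof -
          have "c * x t > 0" using cpos xpos[of t] tt by simp
          hence "(c * x t) * (- F t) \<ge> (c * x t) * \<epsilon>" using Fe by (intro mult_left_mono) auto
          thus ?thesis by (simp add: algebra_simps)
        qed
        have "Fd t = Zd t - c * x t * F t - c * b t" unfolding Fd_def by (simp add: algebra_simps)
        also have "\<dots> \<ge> - (p - 1) * yb + c * \<epsilon> * x t - c * B" using a1 a3 a4 by linarith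
        finally have "Fd t \<ge> 1" using xb2 by linarith
        thus "- Fd t \<le> - 1" by simp
      qed
    qed simp
    obtain U1 where U1: "U1 \<ge> T1" "\<forall>t\<ge>U1. F t < \<epsilon>" using up by blast
    obtain U2 where U2: "U2 \<ge> T2" "\<forall>t\<ge>U2. - F t < \<epsilon>" using lo by blast
    show ?thesis
      using U1 U2 T1 by (intro exI[of _ "max U1 U2"]) (auto simp: abs_less_iff)
  qed
  have Lpos: "L_const m p \<sigma> > 0" unfolding L_const_def using assms(2,3,4)
    by (smt (verit) mult_pos_pos)
  define g0 where "g0 = gamma0 m p \<sigma>"
  have g0eq: "g0 = L_const m p \<sigma> / ((\<sigma>+2)*(p-1))"
    unfolding g0_def gamma0_def alpha_const_def using Lpos assms(2,3,4) by (simp add: field_simps)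
  have g0pos: "g0 > 0" unfolding g0eq using Lpos assms(2,3,4) by simp
  have d1: "\<sigma> + 2 \<noteq> 0" "p - 1 \<noteq> 0" "(\<sigma> + 2) * (p - 1) \<noteq> 0" using assms(2,3,4) by auto
  have g0c: "1 - g0 = c * \<sigma> / (p - 1)"
  proof -
    have "1 - g0 = ((\<sigma> + 2) * (p - 1) - L_const m p \<sigma>) / ((\<sigma> + 2) * (p - 1))"
      unfolding g0eq using d1 by (simp add: diff_divide_distrib)
    also have "(\<sigma> + 2) * (p - 1) - L_const m p \<sigma> = \<sigma> * (p - m)"
      unfolding L_const_def by (simp add: algebra_simps)
    also have "\<sigma> * (p - m) / ((\<sigma> + 2) * (p - 1)) = c * \<sigma> / (p - 1)"
      unfolding c_def using d1 by (simp add: field_simps)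
    finally show ?thesis .
  qed
  define k where "k = (p - 1) / c"
  have kpos: "k > 0" unfolding k_def using cpos assms(2,4) by simp
  have Zd_eq: "Zd t = (k * Z t) * (Z t - g0 - F t)" for t
  proof -
    have "Z t - g0 - F t = c * \<sigma> / (p - 1) + c * y t" using ZF[of t] g0c by linarith
    moreover have "k * (c * \<sigma> / (p - 1) + c * y t) = \<sigma> + (p - 1) * y t"
      unfolding k_def using cpos assms(2,4) by (simp add: field_simps)
    ultimately show ?thesis unfolding Zd_def by simp
  qed
  have up: "\<exists>T. \<forall>t\<ge>T. Z t < g0 + \<delta>" if dp: "\<delta> > 0" for \<delta>
  proof (rule ccontr)
    assume nt: "\<not> (\<exists>T. \<forall>t\<ge>T. Z t < g0 + \<delta>)"
    obtain T where T: "T \<ge> t0 + 1" "\<forall>t\<ge>T. \<bar>F t\<bar> < \<delta>/4" using Fsmall[of "\<delta>/4"] dp by auto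
    have "\<exists>t\<ge>T. \<not> Z t < g0 + \<delta>" using nt by blast
    then obtain s where s: "s \<ge> T" "Z s \<ge> g0 + \<delta>" by (auto simp: not_less)
    have Fs: "\<And>t. t \<ge> s \<Longrightarrow> \<bar>F t\<bar> < \<delta>/4" using T s by simp
    have st: "\<And>t. t \<ge> s \<Longrightarrow> t > t0" using T s by simp
    have stay: "\<forall>t\<ge>s. - Z t < - (g0 + \<delta>/2)"
    proof (rule barrier_stay[of s "\<lambda>t. - Z t" "\<lambda>t. - Zd t"])
      show "\<forall>t\<ge>s. ((\<lambda>t. - Z t) has_real_derivative - Zd t) (at t)"
        using dZ st by (auto intro: DERIV_minus)
      show "- Z s < - (g0 + \<delta>/2)" using s dp by simp
      show "\<forall>t\<ge>s. - Z t = - (g0 + \<delta>/2) \<longrightarrow> - Zd t < 0"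
      proof (intro allI impI)
        fix t assume ts: "s \<le> t" and e: "- Z t = - (g0 + \<delta>/2)"
        have "Z t - g0 - F t > 0" using e Fs[OF ts] by (simp add: abs_less_iff)
        moreover have "k * Z t > 0" using kpos Zpos[of t] st[OF ts] by simp
        ultimately have "Zd t > 0" unfolding Zd_eq by simp
        thus "- Zd t < 0" by simp
      qed
    qed
    define \<eta> where "\<eta> = (k * (g0 + \<delta>/2)) * (\<delta>/4)"
    have etapos: "\<eta> > 0" unfolding \<eta>_def using kpos g0pos dp by simp
    have grow: "\<forall>t\<ge>s. Zd t \<ge> \<eta>"
    proof (intro allI impI)
      fix t assume ts: "s \<le> t"
      have "- Z t < - g0 - \<delta>/2" using stay ts by simp
      hence Zt: "Z t > g0 + \<delta>/2" by linarith
      have w: "Z t - g0 - F t \<ge> \<delta>/4" using Zt Fs[OF ts] by (simp add: abs_less_iff)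
      have h1: "k * (g0 + \<delta>/2) \<le> k * Z t" using Zt kpos by simp
      have h3: "0 \<le> k * Z t" using kpos Zt g0pos dp by simp
      have h4: "0 \<le> \<delta>/4" using dp by simp
      have "(k * (g0 + \<delta>/2)) * (\<delta>/4) \<le> (k * Z t) * (Z t - g0 - F t)"
        by (rule mult_mono[OF h1 w h3 h4])
      thus "Zd t \<ge> \<eta>" unfolding Zd_eq \<eta>_def .
    qed
    define t1 where "t1 = s + (2 + \<delta>) / \<eta>"
    have t1s: "t1 \<ge> s" unfolding t1_def using etapos dp by simp
    have dZs: "\<forall>t\<ge>s. (Z has_real_derivative Zd t) (at t)" using dZ st by blast
    have "Z t1 \<ge> Z s + \<eta> * (t1 - s)"
      by (rule lin_growth[of s Z Zd \<eta> t1, OF dZs grow t1s])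
    also have "\<eta> * (t1 - s) = 2 + \<delta>" unfolding t1_def using etapos by simp
    finally have "Z t1 \<ge> g0 + 2 * \<delta> + 2" using s by simp
    moreover have "Z t1 < 1 + F t1" using Zlt st[OF t1s] by simp
    moreover have "F t1 < \<delta>/4" using Fs[OF t1s] by (simp add: abs_less_iff)
    ultimately show False using g0pos dp by linarith
  qed
  have Xlim: "((\<lambda>t. 1 / x t) \<longlongrightarrow> 0) at_top"
  proof (rule tendsto_eps, intro allI impI)
    fix \<epsilon> :: real assume ep: "\<epsilon> > 0"
    obtain T where T: "T \<ge> t0 + 1" "\<forall>t\<ge>T. x t \<ge> 2 / \<epsilon>" using xlarge[of "2 / \<epsilon>"] by blast
    have "\<bar>1 / x t - 0\<bar> < \<epsilon>" if tT: "t \<ge> T" for t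
    proof -
      have xp: "x t > 0" using xpos[of t] T tT by simp
      have "x t \<ge> 2 / \<epsilon>" using T tT by simp
      hence "\<epsilon> * x t \<ge> 2" using ep by (simp add: field_simps)
      hence "1 < \<epsilon> * x t" by simp
      hence "1 / x t < \<epsilon>" using xp by (simp add: field_simps)
      thus ?thesis using xp by simp
    qed
    thus "\<exists>T. \<forall>t\<ge>T. \<bar>1 / x t - 0\<bar> < \<epsilon>" by blast
  qed
  have Ylim: "((\<lambda>t. y t / x t) \<longlongrightarrow> 0) at_top"
  proof (rule tendsto_eps, intro allI impI)
    fix \<epsilon> :: real assume ep: "\<epsilon> > 0"
    obtain T where T: "T \<ge> t0 + 1" "\<forall>t\<ge>T. x t \<ge> (yb + 1) / \<epsilon>" using xlarge[of "(yb + 1) / \<epsilon>"] by blast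
    have "\<bar>y t / x t - 0\<bar> < \<epsilon>" if tT: "t \<ge> T" for t
    proof -
      have tt: "t > t0" using T tT by simp
      have xp: "x t > 0" using xpos[of t] tt by simp
      have y1: "- yb < y t \<and> y t < 0" using hy tt by blast
      have yabs: "\<bar>y t\<bar> = - y t" using y1 by simp
      have ya: "\<bar>y t\<bar> < yb + 1" using y1 yabs by linarith
      have "x t \<ge> (yb + 1) / \<epsilon>" using T tT by simp
      hence "\<epsilon> * x t \<ge> yb + 1" using ep by (simp add: field_simps)
      hence "\<bar>y t\<bar> < \<epsilon> * x t" using ya by linarith
      hence "\<bar>y t\<bar> / x t < \<epsilon>" using xp by (simp add: pos_divide_less_eq mult.commute)
      moreover have "\<bar>y t / x t - 0\<bar> = \<bar>y t\<bar> / x t" using xp by (simp add: abs_divide)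
      ultimately show ?thesis by linarith
    qed
    thus "\<exists>T. \<forall>t\<ge>T. \<bar>y t / x t - 0\<bar> < \<epsilon>" by blast
  qed
  show ?thesis
  proof (cases "\<forall>\<delta>>0. \<exists>T. \<forall>t\<ge>T. Z t > g0 - \<delta>")
    case True
    have "(Z \<longlongrightarrow> g0) at_top"
    proof (rule tendsto_eps, intro allI impI)
      fix \<epsilon> :: real assume ep: "\<epsilon> > 0"
      obtain T1 where T1: "\<forall>t\<ge>T1. Z t < g0 + \<epsilon>" using up ep by blast
      obtain T2 where T2: "\<forall>t\<ge>T2. Z t > g0 - \<epsilon>" using True ep by blast
      show "\<exists>T. \<forall>t\<ge>T. \<bar>Z t - g0\<bar> < \<epsilon>"
        using T1 T2 by (intro exI[of _ "max T1 T2"]) (auto simp: abs_less_iff)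
    qed
    hence "((\<lambda>t. (1 / x t, y t / x t, z t / x t)) \<longlongrightarrow> (0, 0, gamma0 m p \<sigma>)) at_top"
      using tendsto_Pair[OF Xlim tendsto_Pair[OF Ylim]] unfolding Z_def g0_def by blast
    thus ?thesis by blast
  next
    case False
    then obtain \<delta> where dp: "\<delta> > 0" and nt: "\<not> (\<exists>T. \<forall>t\<ge>T. Z t > g0 - \<delta>)" by blast
    obtain T where T: "T \<ge> t0 + 1" "\<forall>t\<ge>T. \<bar>F t\<bar> < \<delta>/4" using Fsmall[of "\<delta>/4"] dp by auto
    have "\<exists>t\<ge>T. \<not> Z t > g0 - \<delta>" using nt by blast
    then obtain s where s: "s \<ge> T" "Z s \<le> g0 - \<delta>" by (auto simp: not_less)
    have Fs: "\<And>t. t \<ge> s \<Longrightarrow> \<bar>F t\<bar> < \<delta>/4" using T s by simp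
    have st: "\<And>t. t \<ge> s \<Longrightarrow> t > t0" using T s by simp
    have dZs: "\<forall>t\<ge>s. (Z has_real_derivative Zd t) (at t)" using dZ st by blast
    have stay: "\<forall>t\<ge>s. Z t < g0 - \<delta>/2"
    proof (rule barrier_stay[of s Z Zd])
      show "\<forall>t\<ge>s. (Z has_real_derivative Zd t) (at t)" by (rule dZs)
      show "Z s < g0 - \<delta>/2" using s dp by simp
      show "\<forall>t\<ge>s. Z t = g0 - \<delta>/2 \<longrightarrow> Zd t < 0"
      proof (intro allI impI)
        fix t assume ts: "s \<le> t" and e: "Z t = g0 - \<delta>/2"
        have "Z t - g0 - F t < 0" using e Fs[OF ts] by (simp add: abs_less_iff)
        moreover have "k * Z t > 0" using kpos Zpos[of t] st[OF ts] by simp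
        ultimately show "Zd t < 0" unfolding Zd_eq by (simp add: mult_pos_neg)
      qed
    qed
    have "(Z \<longlongrightarrow> 0) at_top"
    proof (rule tendsto_eps, intro allI impI)
      fix \<epsilon> :: real assume ep: "\<epsilon> > 0"
      have "\<exists>T'\<ge>s. \<forall>t\<ge>T'. Z t < \<epsilon>"
      proof (rule barrier_eventually[of s Z Zd "(k * \<epsilon>) * (\<delta>/4)" \<epsilon>])
        show "\<forall>t\<ge>s. (Z has_real_derivative Zd t) (at t)" by (rule dZs)
        show "(k * \<epsilon>) * (\<delta>/4) > 0" using kpos ep dp by simp
        show "\<forall>t\<ge>s. \<epsilon> \<le> Z t \<longrightarrow> Zd t \<le> - ((k * \<epsilon>) * (\<delta>/4))"
        proof (intro allI impI)
          fix t assume ts: "s \<le> t" and Ze: "\<epsilon> \<le> Z t"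
          have zs: "Z t < g0 - \<delta>/2" using stay ts by blast
          have fs: "F t < \<delta>/4" "- F t < \<delta>/4" using Fs[OF ts] by (simp_all add: abs_less_iff)
          have w: "- (Z t - g0 - F t) \<ge> \<delta>/4" using zs fs by linarith
          have h1: "k * \<epsilon> \<le> k * Z t" using Ze kpos by simp
          have h3: "0 \<le> k * Z t" using kpos Ze ep by simp
          have h4: "0 \<le> \<delta>/4" using dp by simp
          have "(k * \<epsilon>) * (\<delta>/4) \<le> (k * Z t) * (- (Z t - g0 - F t))"
            by (rule mult_mono[OF h1 w h3 h4])
          moreover have "(k * Z t) * (- (Z t - g0 - F t)) = - Zd t" unfolding Zd_eq by (rule mult_minus_right)
          ultimately show "Zd t \<le> - ((k * \<epsilon>) * (\<delta>/4))" by linarith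
        qed
      qed
      then obtain T' where T': "T' \<ge> s" "\<forall>t\<ge>T'. Z t < \<epsilon>" by blast
      have "\<bar>Z t - 0\<bar> < \<epsilon>" if "t \<ge> T'" for t
        using T' that Zpos[of t] st[of t] by simp
      thus "\<exists>T. \<forall>t\<ge>T. \<bar>Z t - 0\<bar> < \<epsilon>" by blast
    qed
    hence "((\<lambda>t. (1 / x t, y t / x t, z t / x t)) \<longlongrightarrow> (0, 0, 0)) at_top"
      using tendsto_Pair[OF Xlim tendsto_Pair[OF Ylim]] unfolding Z_def by blast
    thus ?thesis by blast
  qed
qed
end
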